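(* There exists a function $f\in C^2(\mathbb{R})$ such that for every $x\in\mathbb{R}$ there is a polynomial $P_x$ of degree at most $2$ with $$\liminf_{y\to x}\frac{f(y)-P_x(y)}{|y-x|^k}>-\infty\quad\text{for every } k>2,$$ but for no integer $k\ge 3$ does $f$ have the Lusin property of class $C^k$; i.e., for each $k\ge3$ there is $\varepsilon>0$ such that every $g\in C^k(\mathbb{R})$ satisfies $\mathcal{L}^1(\{x\in\mathbb{R}: f(x)\neq g(x)\})>\varepsilon$.
   Context: $\mathcal{L}^1$ denotes Lebesgue measure on $\mathbb{R}$. *)

theory Defs
  imports "HOL-Analysis.Analysis" "HOL-Computational_Algebra.Polynomial"
begin

definition Ck :: "nat \<Rightarrow> (real \<Rightarrow> real) \<Rightarrow> bool" where
  "Ck k f \<longleftrightarrow> (\<forall>j<k. \<forall>x. ((deriv ^^ j) f) differentiable (at x))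
                 \<and> continuous_on UNIV ((deriv ^^ k) f)"

end

theory Submission
  imports Defs
begin

definition phi :: "real \<Rightarrow> real" where "phi t = \<bar>t - of_int \<lfloor>t + 1/2\<rfloor>\<bar>"

lemma phi_nonneg: "0 \<le> phi t" by (simp add: phi_def)

lemma phi_le_half: "phi t \<le> 1/2"
proof -
  have "of_int \<lfloor>t + 1/2\<rfloor> \<le> t + 1/2" "t + 1/2 < of_int \<lfloor>t + 1/2\<rfloor> + 1"
    by (rule of_int_floor_le, rule real_of_int_floor_add_one_gt)
  then show ?thesis unfolding phi_def by linarith
qed

lemma phi_le: "phi t \<le> \<bar>t - of_int n\<bar>"
proof -
  let ?m = "\<lfloor>t + 1/2\<rfloor>"
  have a: "of_int ?m \<le> t + 1/2" "t + 1/2 < of_int ?m + 1"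
    by (rule of_int_floor_le, rule real_of_int_floor_add_one_gt)
  consider "n = ?m" | "n \<le> ?m - 1" | "n \<ge> ?m + 1" by linarith
  then show ?thesis
  proof cases
    case 1 then show ?thesis by (simp add: phi_def)
  next
    case 2 then have "real_of_int n \<le> of_int ?m - 1" by linarith
    with a show ?thesis unfolding phi_def by linarith
  next
    case 3 then have "real_of_int n \<ge> of_int ?m + 1" by linarith
    with a show ?thesis unfolding phi_def by linarith
  qed
qed

lemma phi_eq:
  assumes "\<bar>t - of_int n\<bar> \<le> 1/2" shows "phi t = \<bar>t - of_int n\<bar>"
proof -
  let ?m = "\<lfloor>t + 1/2\<rfloor>"
  have a: "of_int ?m \<le> t + 1/2" "t + 1/2 < of_int ?m + 1"
    by (rule of_int_floor_le, rule real_of_int_floor_add_one_gt)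
  show ?thesis
  proof (cases "n = ?m")
    case True then show ?thesis by (simp add: phi_def)
  next
    case False
    then have "n \<le> ?m - 1 \<or> n \<ge> ?m + 1" by linarith
    then have "real_of_int n \<le> of_int ?m - 1 \<or> real_of_int n \<ge> of_int ?m + 1" by linarith
    then have "\<bar>t - of_int n\<bar> \<le> phi t" using a assms unfolding phi_def by linarith
    with phi_le[of t n] show ?thesis by linarith
  qed
qed

lemma phi_lip: "\<bar>phi t - phi s\<bar> \<le> \<bar>t - s\<bar>"
proof -
  have "phi t \<le> phi s + \<bar>t - s\<bar>"
    using phi_le[of t "\<lfloor>s + 1/2\<rfloor>"] by (simp add: phi_def)
  moreover have "phi s \<le> phi t + \<bar>t - s\<bar>"
    using phi_le[of s "\<lfloor>t + 1/2\<rfloor>"] by (simp add: phi_def)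
  ultimately show ?thesis by linarith
qed

lemma phi_piece:
  assumes "(of_int k \<le> t \<and> t \<le> of_int k + 1/2 \<and> of_int k \<le> s \<and> s \<le> of_int k + 1/2) \<or>
           (of_int k - 1/2 \<le> t \<and> t \<le> of_int k \<and> of_int k - 1/2 \<le> s \<and> s \<le> of_int k)"
  shows "\<bar>phi t - phi s\<bar> = \<bar>t - s\<bar>"
proof -
  have "\<bar>t - of_int k\<bar> \<le> 1/2" "\<bar>s - of_int k\<bar> \<le> 1/2" using assms by auto
  then have "phi t = \<bar>t - of_int k\<bar>" "phi s = \<bar>s - of_int k\<bar>" by (simp_all add: phi_eq)
  then show ?thesis using assms by auto
qed

lemma continuous_phi: "continuous_on UNIV phi"
  unfolding continuous_on_iff
  by (metis dist_real_def phi_lip le_less_trans)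

definition aa :: "nat \<Rightarrow> real" where "aa m = (1/18)^m"
definition bb :: "nat \<Rightarrow> nat" where "bb m = 18^(2*m)"
definition trm :: "nat \<Rightarrow> real \<Rightarrow> real" where "trm m x = aa m * phi (real (bb m) * x)"
definition hh :: "real \<Rightarrow> real" where "hh x = (\<Sum>m. trm m x)"

lemma aa_bb: "aa m * real (bb m) = 18^m"
  by (simp add: aa_def bb_def mult_2 power_add power_one_over)

lemma summable_aa: "summable aa"
  unfolding aa_def by (rule summable_geometric) simp

lemma trm_nonneg: "0 \<le> trm m x"
  by (simp add: trm_def aa_def phi_nonneg)

lemma trm_le: "trm m x \<le> aa m / 2"
proof -
  have "aa m * phi (real (bb m) * x) \<le> aa m * (1/2)"
    by (rule mult_left_mono[OF phi_le_half]) (simp add: aa_def)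
  then show ?thesis by (simp add: trm_def)
qed

lemma trm_le2: "trm m x * 2 \<le> aa m" using trm_le[of m x] by simp

lemma summable_trm: "summable (\<lambda>m. trm m x)"
  by (rule summable_comparison_test[of _ "\<lambda>m. aa m / 2"])
     (auto simp: trm_nonneg trm_le trm_le2 summable_aa summable_divide)

lemma hh_nonneg: "0 \<le> hh x"
  unfolding hh_def by (rule suminf_nonneg[OF summable_trm trm_nonneg])

lemma continuous_hh: "continuous_on UNIV hh"
proof -
  have ul: "uniform_limit UNIV (\<lambda>n x. \<Sum>i<n. trm i x) (\<lambda>x. suminf (\<lambda>i. trm i x)) sequentially"
    by (rule Weierstrass_m_test[of UNIV _ "\<lambda>m. aa m / 2"])
       (auto simp: trm_nonneg trm_le trm_le2 summable_aa summable_divide)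
  have c: "continuous_on UNIV (trm i)" for i
    unfolding trm_def
    by (intro continuous_intros continuous_on_compose2[OF continuous_phi]) auto
  show ?thesis unfolding hh_def
    by (rule uniform_limit_theorem[OF _ ul]) (auto intro!: always_eventually continuous_on_sum c)
qed

lemma hh_split: "hh x = (\<Sum>m<n. trm m x) + trm n x + (\<Sum>i. trm (i + Suc n) x)"
proof -
  have "hh x = (\<Sum>i. trm (i + Suc n) x) + sum (\<lambda>m. trm m x) {..<Suc n}"
    unfolding hh_def by (rule suminf_split_initial_segment[OF summable_trm])
  then show ?thesis by simp
qed

lemma tail_nonneg: "0 \<le> (\<Sum>i. trm (i + Suc n) x)"
  by (rule suminf_nonneg) (use summable_ignore_initial_segment[OF summable_trm, of "Suc n"] in \<open>auto simp: trm_nonneg\<close>)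

lemma tail_le: "(\<Sum>i. trm (i + Suc n) x) \<le> 1 / (34 * 18^n)"
proof -
  have s1: "summable (\<lambda>i. trm (i + Suc n) x)"
    by (rule summable_ignore_initial_segment[OF summable_trm])
  have g: "summable (\<lambda>i. (1/18::real)^i)" by (rule summable_geometric) simp
  have eq: "(\<lambda>i. aa (i + Suc n) / 2) = (\<lambda>i. ((1/18)^Suc n / 2) * (1/18)^i)"
    by (auto simp: aa_def power_add)
  have s2: "summable (\<lambda>i. aa (i + Suc n) / 2)"
    unfolding eq by (rule summable_mult[OF g])
  have "(\<Sum>i. trm (i + Suc n) x) \<le> (\<Sum>i. aa (i + Suc n) / 2)"
    by (rule suminf_le[OF _ s1 s2]) (simp add: trm_le trm_le2)
  also have "\<dots> = ((1/18)^Suc n / 2) * (\<Sum>i. (1/18::real)^i)"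
    unfolding eq by (rule suminf_mult[OF g])
  also have "\<dots> = ((1/18)^Suc n / 2) * (1 / (1 - 1/18))"
    by (subst suminf_geometric) auto
  also have "\<dots> = 1 / (34 * 18^n)" by (simp add: power_divide field_simps)
  finally show ?thesis .
qed

lemma geo_le: "(\<Sum>m<n. (18::real)^m) \<le> 18^n / 17"
  by (induction n) auto

lemma lower_lip: "\<bar>(\<Sum>m<n. trm m x) - (\<Sum>m<n. trm m y)\<bar> \<le> 18^n / 17 * \<bar>x - y\<bar>"
proof -
  have "\<bar>(\<Sum>m<n. trm m x) - (\<Sum>m<n. trm m y)\<bar> = \<bar>\<Sum>m<n. trm m x - trm m y\<bar>"
    by (simp add: sum_subtractf)
  also have "\<dots> \<le> (\<Sum>m<n. \<bar>trm m x - trm m y\<bar>)" by (rule sum_abs)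
  also have "\<dots> \<le> (\<Sum>m<n. 18^m * \<bar>x - y\<bar>)"
  proof (rule sum_mono)
    fix m
    have "\<bar>trm m x - trm m y\<bar> = aa m * \<bar>phi (real (bb m) * x) - phi (real (bb m) * y)\<bar>"
      by (simp add: trm_def aa_def right_diff_distrib[symmetric] abs_mult)
    also have "\<dots> \<le> aa m * \<bar>real (bb m) * x - real (bb m) * y\<bar>"
      by (rule mult_left_mono[OF phi_lip]) (simp add: aa_def)
    also have "\<dots> = (aa m * real (bb m)) * \<bar>x - y\<bar>"
      by (simp add: right_diff_distrib[symmetric] abs_mult aa_def)
    finally show "\<bar>trm m x - trm m y\<bar> \<le> 18^m * \<bar>x - y\<bar>" by (simp add: aa_bb)
  qed
  also have "\<dots> = (\<Sum>m<n. (18::real)^m) * \<bar>x - y\<bar>" by (simp add: sum_distrib_right)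
  also have "\<dots> \<le> 18^n / 17 * \<bar>x - y\<bar>" by (rule mult_right_mono[OF geo_le]) simp
  finally show ?thesis .
qed

lemma key_lower:
  assumes "(of_int k \<le> real (bb n) * x \<and> real (bb n) * x \<le> of_int k + 1/2 \<and> of_int k \<le> real (bb n) * y \<and> real (bb n) * y \<le> of_int k + 1/2) \<or>
           (of_int k - 1/2 \<le> real (bb n) * x \<and> real (bb n) * x \<le> of_int k \<and> of_int k - 1/2 \<le> real (bb n) * y \<and> real (bb n) * y \<le> of_int k)"
  shows "\<bar>hh x - hh y\<bar> \<ge> 16/17 * 18^n * \<bar>x - y\<bar> - 1 / (34 * 18^n)"
proof -
  have "\<bar>trm n x - trm n y\<bar> = aa n * \<bar>phi (real (bb n) * x) - phi (real (bb n) * y)\<bar>"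
    by (simp add: trm_def aa_def right_diff_distrib[symmetric] abs_mult)
  also have "\<dots> = aa n * \<bar>real (bb n) * x - real (bb n) * y\<bar>"
    using phi_piece[OF assms] by simp
  also have "\<dots> = (aa n * real (bb n)) * \<bar>x - y\<bar>"
    by (simp add: right_diff_distrib[symmetric] abs_mult aa_def)
  finally have m: "\<bar>trm n x - trm n y\<bar> = 18^n * \<bar>x - y\<bar>" by (simp add: aa_bb)
  have l: "\<bar>(\<Sum>m<n. trm m x) - (\<Sum>m<n. trm m y)\<bar> \<le> 18^n / 17 * \<bar>x - y\<bar>" by (rule lower_lip)
  have t1: "0 \<le> (\<Sum>i. trm (i + Suc n) x)" "(\<Sum>i. trm (i + Suc n) x) \<le> 1 / (34 * 18^n)"
    by (rule tail_nonneg, rule tail_le)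
  have t2: "0 \<le> (\<Sum>i. trm (i + Suc n) y)" "(\<Sum>i. trm (i + Suc n) y) \<le> 1 / (34 * 18^n)"
    by (rule tail_nonneg, rule tail_le)
  show ?thesis using m l t1 t2 hh_split[of x n] hh_split[of y n] by linarith
qed

lemma small_dist:
  fixes N u :: real
  assumes N: "N > 0" and u: "u \<ge> 0" and h: "8/17 * N * u \<le> 1 / (34 * N)"
  shows "u \<le> 1 / (16 * (N * N))"
proof -
  from h N have "8/17 * N * u * (34 * N) \<le> 1" by (simp add: field_simps)
  then have "u * (16 * (N * N)) \<le> 1" by (simp add: algebra_simps)
  then show ?thesis using N by (simp add: field_simps)
qed

lemma cover:
  assumes B: "B \<subseteq> {0..1}" and lip: "\<And>x y. x \<in> B \<Longrightarrow> y \<in> B \<Longrightarrow> \<bar>hh x - hh y\<bar> \<le> L * \<bar>x - y\<bar>"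
  shows "\<exists>E. E \<in> sets lebesgue \<and> B \<subseteq> E \<and> emeasure lebesgue E \<le> ennreal (1/2)"
proof -
  obtain n where n: "L * 17 / 8 < (18::real)^n" using real_arch_pow[of 18 "L * 17 / 8"] by auto
  define N :: real where "N = 18^n"
  have N: "N > 0" by (simp add: N_def)
  define b where "b = bb n"
  have rb: "real b = N * N" by (simp add: b_def bb_def N_def mult_2 power_add)
  have b1: "real b \<ge> 1" by (simp add: b_def bb_def one_le_power)
  define \<delta> :: real where "\<delta> = 1 / (16 * real b)"
  have dpos: "\<delta> > 0" using b1 by (simp add: \<delta>_def)
  define pc where "pc = (\<lambda>(k::int, s::bool) (x::real). x \<in> B \<and>
      (if s then of_int k \<le> real b * x \<and> real b * x \<le> of_int k + 1/2
            else of_int k - 1/2 \<le> real b * x \<and> real b * x \<le> of_int k))"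
  have close: "\<bar>x - y\<bar> \<le> \<delta>" if "pc i x" "pc i y" for i x y
  proof -
    obtain k s where i: "i = (k, s)" by fastforce
    have xy: "x \<in> B" "y \<in> B" using that by (auto simp: pc_def i)
    have "(of_int k \<le> real (bb n) * x \<and> real (bb n) * x \<le> of_int k + 1/2 \<and> of_int k \<le> real (bb n) * y \<and> real (bb n) * y \<le> of_int k + 1/2) \<or>
           (of_int k - 1/2 \<le> real (bb n) * x \<and> real (bb n) * x \<le> of_int k \<and> of_int k - 1/2 \<le> real (bb n) * y \<and> real (bb n) * y \<le> of_int k)"
      using that by (cases s) (auto simp: pc_def i b_def)
    from key_lower[OF this] have kl: "\<bar>hh x - hh y\<bar> \<ge> 16/17 * N * \<bar>x - y\<bar> - 1 / (34 * N)"
      by (simp add: N_def)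
    have "L * \<bar>x - y\<bar> \<le> 8/17 * N * \<bar>x - y\<bar>"
      using n by (intro mult_right_mono) (auto simp: N_def)
    with lip[OF xy] kl have "8/17 * N * \<bar>x - y\<bar> \<le> 1 / (34 * N)" by linarith
    from small_dist[OF N _ this] show ?thesis by (simp add: \<delta>_def rb)
  qed
  define I where "I = {0..int b} \<times> (UNIV :: bool set)"
  have finI: "finite I" by (simp add: I_def)
  have cardI: "card I = 2 * (b + 1)" by (simp add: I_def card_cartesian_product)
  define p where "p = (\<lambda>i. SOME x. pc i x)"
  define E where "E = (\<Union>i\<in>I. cball (p i) \<delta>)"
  have sub: "B \<subseteq> E"
  proof
    fix x assume x: "x \<in> B"
    then have x01: "0 \<le> x" "x \<le> 1" using B by auto
    define k where "k = \<lfloor>real b * x + 1/2\<rfloor>"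
    have k1: "of_int k \<le> real b * x + 1/2" "real b * x + 1/2 < of_int k + 1"
      unfolding k_def by (rule of_int_floor_le, rule real_of_int_floor_add_one_gt)
    have bx: "0 \<le> real b * x" "real b * x \<le> real b" using x01 b1 by (auto simp: mult_left_le)
    have "k \<ge> 0" using k1 bx by linarith
    moreover have "k \<le> int b" using k1 bx by linarith
    ultimately have kI: "(k, of_int k \<le> real b * x) \<in> I" by (simp add: I_def)
    have pcx: "pc (k, of_int k \<le> real b * x) x" using x k1 by (auto simp: pc_def)
    then have "pc (k, of_int k \<le> real b * x) (p (k, of_int k \<le> real b * x))"
      unfolding p_def by (rule someI)
    from close[OF pcx this] have "x \<in> cball (p (k, of_int k \<le> real b * x)) \<delta>"
      by (simp add: dist_real_def abs_minus_commute)
    with kI show "x \<in> E" by (auto simp: E_def)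
  qed
  have "emeasure lebesgue E \<le> (\<Sum>i\<in>I. emeasure lebesgue (cball (p i) \<delta>))"
    unfolding E_def by (rule emeasure_subadditive_finite[OF finI]) auto
  also have "\<dots> = (\<Sum>i\<in>I. ennreal (2 * \<delta>))"
  proof (rule sum.cong[OF refl])
    fix i show "emeasure lebesgue (cball (p i) \<delta>) = ennreal (2 * \<delta>)"
      using dpos unfolding cball_eq_atLeastAtMost by simp
  qed
  also have "\<dots> = ennreal (real (card I) * (2 * \<delta>))"
    using dpos by (simp add: ennreal_of_nat_eq_real_of_nat ennreal_mult[symmetric])
  also have "\<dots> \<le> ennreal (1/2)"
  proof (rule ennreal_leI)
    have "real (card I) * (2 * \<delta>) = (real b + 1) / (4 * real b)"
      using b1 by (simp add: cardI \<delta>_def field_simps)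
    also have "\<dots> \<le> 1/2" using b1 by (simp add: field_simps)
    finally show "real (card I) * (2 * \<delta>) \<le> 1/2" .
  qed
  finally have "emeasure lebesgue E \<le> ennreal (1/2)" .
  moreover have "E \<in> sets lebesgue" unfolding E_def using finI by auto
  ultimately show ?thesis using sub by blast
qed

lemma deriv_agree:
  fixes p q :: "real \<Rightarrow> real"
  assumes dp: "p differentiable (at x)" and dq: "q differentiable (at x)"
    and lim: "x islimpt S" and xS: "x \<in> S" and eq: "\<And>y. y \<in> S \<Longrightarrow> p y = q y"
  shows "deriv p x = deriv q x"
proof -
  have "(p has_field_derivative deriv p x) (at x within S)"
    using dp DERIV_deriv_iff_real_differentiable has_field_derivative_at_within by blast
  then have 1: "((\<lambda>y. (p y - p x) / (y - x)) \<longlongrightarrow> deriv p x) (at x within S)"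
    by (simp add: has_field_derivative_iff)
  have "(q has_field_derivative deriv q x) (at x within S)"
    using dq DERIV_deriv_iff_real_differentiable has_field_derivative_at_within by blast
  then have 2: "((\<lambda>y. (q y - q x) / (y - x)) \<longlongrightarrow> deriv q x) (at x within S)"
    by (simp add: has_field_derivative_iff)
  have ev: "\<forall>\<^sub>F y in at x within S. (q y - q x) / (y - x) = (p y - p x) / (y - x)"
    unfolding eventually_at_filter using eq xS by (auto intro!: always_eventually)
  have 3: "((\<lambda>y. (p y - p x) / (y - x)) \<longlongrightarrow> deriv q x) (at x within S)"
    by (rule Lim_transform_eventually[OF 2 ev])
  show ?thesis
    by (rule tendsto_unique[OF _ 1 3]) (simp add: trivial_limit_within lim)
qed

lemma countable_isolated:
  fixes A :: "real set"
  shows "countable {x\<in>A. \<not> x islimpt A}"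
proof -
  define X where "X = {x\<in>A. \<not> x islimpt A}"
  define P where "P = (\<lambda>x (q::real \<times> real). fst q \<in> \<rat> \<and> snd q \<in> \<rat> \<and> fst q < x \<and> x < snd q \<and>
                          (\<forall>y\<in>A. fst q < y \<and> y < snd q \<longrightarrow> y = x))"
  have ex: "\<exists>q. P x q" if "x \<in> X" for x
  proof -
    from that obtain e where e: "e > 0" "\<forall>y\<in>A. y \<noteq> x \<longrightarrow> \<not> dist y x < e"
      unfolding X_def islimpt_approachable by auto
    obtain q1 where q1: "q1 \<in> \<rat>" "x - e < q1" "q1 < x" using Rats_dense_in_real[of "x - e" x] e by auto
    obtain q2 where q2: "q2 \<in> \<rat>" "x < q2" "q2 < x + e" using Rats_dense_in_real[of x "x + e"] e by auto
    have "\<forall>y\<in>A. q1 < y \<and> y < q2 \<longrightarrow> y = x"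
    proof (intro ballI impI)
      fix y assume "y \<in> A" "q1 < y \<and> y < q2"
      then have "dist y x < e" using q1 q2 by (auto simp: dist_real_def abs_if)
      with e \<open>y \<in> A\<close> show "y = x" by blast
    qed
    then show ?thesis using q1 q2 unfolding P_def by (intro exI[of _ "(q1, q2)"]) auto
  qed
  define F where "F = (\<lambda>x. SOME q. P x q)"
  have FP: "P x (F x)" if "x \<in> X" for x
    unfolding F_def using ex[OF that] by (rule someI_ex)
  have "inj_on F X"
  proof (rule inj_onI)
    fix x y assume xy: "x \<in> X" "y \<in> X" "F x = F y"
    have "y \<in> A" using xy X_def by auto
    with FP[OF xy(1)] FP[OF xy(2)] xy(3) show "x = y" unfolding P_def by metis
  qed
  moreover have "countable (F ` X)"
  proof (rule countable_subset)
    show "F ` X \<subseteq> \<rat> \<times> \<rat>"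
    proof (rule image_subsetI)
      fix x assume "x \<in> X"
      from FP[OF this] show "F x \<in> \<rat> \<times> \<rat>" unfolding P_def mem_Times_iff by blast
    qed
    show "countable (\<rat> \<times> (\<rat>::real set))" by (simp add: countable_rat)
  qed
  ultimately show ?thesis unfolding X_def[symmetric] by (rule countable_image_inj_on[rotated])
qed

lemma lip_from_deriv:
  fixes G G' :: "real \<Rightarrow> real"
  assumes d: "\<And>z. DERIV G z :> G' z" and bd: "\<And>z. z \<in> {0..1} \<Longrightarrow> \<bar>G' z\<bar> \<le> M"
    and x: "x \<in> {0..1}" and y: "y \<in> {0..1}"
  shows "\<bar>G x - G y\<bar> \<le> M * \<bar>x - y\<bar>"
proof -
  have main: "\<bar>G b - G a\<bar> \<le> M * (b - a)" if "a < b" "a \<in> {0..1}" "b \<in> {0..1}" for a b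
  proof -
    obtain z where z: "a < z" "z < b" "G b - G a = (b - a) * G' z"
      using MVT2[OF \<open>a < b\<close> d] by blast
    have "z \<in> {0..1}" using z that by auto
    then have "\<bar>G' z\<bar> \<le> M" by (rule bd)
    then have "(b - a) * \<bar>G' z\<bar> \<le> (b - a) * M" using that by (intro mult_left_mono) auto
    then show ?thesis using z that by (simp add: abs_mult mult.commute)
  qed
  consider "x < y" | "x = y" | "y < x" by linarith
  then show ?thesis
  proof cases
    case 1 then show ?thesis using main[OF 1 x y] by (simp add: abs_minus_commute)
  next
    case 2 then show ?thesis by simp
  next
    case 3 then show ?thesis using main[OF 3 y x] by simp
  qed
qed

lemma lusin_fail:
  fixes f g :: "real \<Rightarrow> real"
  assumes df: "\<And>x. f differentiable (at x)" and ddf: "\<And>x. deriv f differentiable (at x)"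
    and f2: "\<And>x. deriv (deriv f) x = hh x"
    and dg: "\<And>x. g differentiable (at x)" and ddg: "\<And>x. deriv g differentiable (at x)"
    and dddg: "\<And>x. deriv (deriv g) differentiable (at x)"
    and g3: "continuous_on UNIV (deriv (deriv (deriv g)))"
  shows "emeasure lebesgue {x. f x \<noteq> g x} > ennreal (1/4)"
proof -
  define A where "A = {x\<in>{0..1}. f x = g x}"
  define A1 where "A1 = {x\<in>A. x islimpt A}"
  define A2 where "A2 = {x\<in>A1. x islimpt A1}"
  have d1: "deriv f x = deriv g x" if "x \<in> A1" for x
    using that by (intro deriv_agree[OF df dg, of x A]) (auto simp: A1_def A_def)
  have d2: "deriv (deriv f) x = deriv (deriv g) x" if "x \<in> A2" for x
    using that by (intro deriv_agree[OF ddf ddg, of x A1]) (auto simp: A2_def d1)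
  have "bounded (deriv (deriv (deriv g)) ` {0..1})"
    by (rule compact_imp_bounded[OF compact_continuous_image[OF continuous_on_subset[OF g3] compact_Icc]]) auto
  then obtain M where M: "\<And>z. z \<in> {0..1} \<Longrightarrow> \<bar>deriv (deriv (deriv g)) z\<bar> \<le> M"
    unfolding bounded_iff by (auto simp del: atLeastAtMost_iff)
  have lipg: "\<bar>deriv (deriv g) x - deriv (deriv g) y\<bar> \<le> M * \<bar>x - y\<bar>" if "x \<in> {0..1}" "y \<in> {0..1}" for x y
    by (rule lip_from_deriv[of "deriv (deriv g)" "deriv (deriv (deriv g))" M x y])
       (use that M in \<open>simp_all add: dddg DERIV_deriv_iff_real_differentiable\<close>)
  have A2sub: "A2 \<subseteq> {0..1}" by (auto simp: A2_def A1_def A_def)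
  have lip: "\<bar>hh x - hh y\<bar> \<le> M * \<bar>x - y\<bar>" if "x \<in> A2" "y \<in> A2" for x y
  proof -
    have "x \<in> {0..1}" "y \<in> {0..1}" using A2sub that by auto
    then show ?thesis using lipg[of x y] d2[OF that(1)] d2[OF that(2)] f2[of x] f2[of y] by simp
  qed
  obtain E where E: "E \<in> sets lebesgue" "A2 \<subseteq> E" "emeasure lebesgue E \<le> ennreal (1/2)"
    using cover[OF A2sub lip] by blast
  define C where "C = {x\<in>A. \<not> x islimpt A} \<union> {x\<in>A1. \<not> x islimpt A1}"
  have "countable C" unfolding C_def by (simp add: countable_isolated)
  then have Cnull: "C \<in> null_sets lebesgue"
    by (simp add: countable_imp_null_set_lborel null_sets_completionI)
  define U where "U = {x. f x \<noteq> g x}"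
  have cf: "continuous_on UNIV f"
    by (intro continuous_at_imp_continuous_on ballI differentiable_imp_continuous_within df)
  have cg: "continuous_on UNIV g"
    by (intro continuous_at_imp_continuous_on ballI differentiable_imp_continuous_within dg)
  have "open U" unfolding U_def by (rule open_Collect_neq[OF cf cg])
  then have Us: "U \<in> sets lebesgue" by simp
  have cov: "{0..1} \<subseteq> U \<union> C \<union> E"
  proof
    fix x :: real assume x: "x \<in> {0..1}"
    show "x \<in> U \<union> C \<union> E"
    proof (cases "f x = g x")
      case False then show ?thesis by (simp add: U_def)
    next
      case True
      then have "x \<in> A" using x by (simp add: A_def)
      then show ?thesis using E(2) by (auto simp: C_def A1_def A2_def)
    qed
  qed
  have Cs: "C \<in> sets lebesgue" using Cnull by auto
  have "(1::ennreal) = emeasure lebesgue {0..1::real}" by simp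
  also have "\<dots> \<le> emeasure lebesgue (U \<union> C \<union> E)"
    by (rule emeasure_mono[OF cov]) (use Us Cs E(1) in auto)
  also have "\<dots> \<le> emeasure lebesgue (U \<union> C) + emeasure lebesgue E"
    by (rule emeasure_subadditive) (use Us Cs E(1) in auto)
  also have "\<dots> \<le> (emeasure lebesgue U + emeasure lebesgue C) + emeasure lebesgue E"
    by (intro add_right_mono emeasure_subadditive Us Cs)
  also have "\<dots> \<le> emeasure lebesgue U + ennreal (1/2)"
    using Cnull E(3) by (simp add: null_setsD1 add_left_mono)
  finally have le: "1 \<le> emeasure lebesgue U + ennreal (1/2)" .
  show ?thesis
  proof (rule ccontr)
    assume "\<not> ?thesis"
    then have "emeasure lebesgue U \<le> ennreal (1/4)" by (simp add: U_def not_less)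
    then have "emeasure lebesgue U + ennreal (1/2) \<le> ennreal (1/4) + ennreal (1/2)"
      by (rule add_right_mono)
    also have "\<dots> = ennreal (1/4 + 1/2)" by (rule ennreal_plus[symmetric]) auto
    also have "\<dots> = ennreal (3/4)" by simp
    finally have "emeasure lebesgue U + ennreal (1/2) \<le> ennreal (3/4)" .
    with le have "(1::ennreal) \<le> ennreal (3/4)" by (rule order_trans)
    then show False by (simp add: ennreal_le_1)
  qed
qed

lemma above_tangent:
  fixes F H :: "real \<Rightarrow> real"
  assumes dF: "\<And>z. DERIV F z :> H z" and dH: "\<And>z. DERIV H z :> hh z"
  shows "F x + H x * (y - x) \<le> F y"
proof -
  have mono: "H a \<le> H b" if "a \<le> b" for a b
    by (rule DERIV_nonneg_imp_nondecreasing[OF that]) (use dH hh_nonneg in blast)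
  consider "x < y" | "x = y" | "y < x" by linarith
  then show ?thesis
  proof cases
    case 1
    obtain z where z: "x < z" "z < y" "F y - F x = (y - x) * H z" using MVT2[OF 1 dF] by blast
    have "(y - x) * H x \<le> (y - x) * H z" using mono[of x z] z 1 by (intro mult_left_mono) auto
    moreover have "F y = F x + (y - x) * H z" using z by (simp add: algebra_simps)
    ultimately show ?thesis by (simp add: algebra_simps)
  next
    case 2 then show ?thesis by simp
  next
    case 3
    obtain z where z: "y < z" "z < x" "F x - F y = (x - y) * H z" using MVT2[OF 3 dF] by blast
    have "(x - y) * H z \<le> (x - y) * H x" using mono[of z x] z 3 by (intro mult_left_mono) auto
    then show ?thesis using z by (simp add: algebra_simps)
  qed
qed

lemma antideriv:
  fixes h :: "real \<Rightarrow> real"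
  assumes "continuous_on UNIV h"
  obtains G where "\<And>x. DERIV G x :> h x"
proof -
  have "\<exists>G. \<forall>x::real. -\<infinity> < x \<longrightarrow> x < \<infinity> \<longrightarrow> (G has_vector_derivative h x) (at x)"
    by (rule einterval_antiderivative)
       (use assms in \<open>auto simp: continuous_on_eq_continuous_at\<close>)
  then show ?thesis using that
    by (auto simp: has_real_derivative_iff_has_vector_derivative)
qed

theorem mainTheorem10:
  shows "\<exists>f :: real \<Rightarrow> real. Ck 2 f
     \<and> (\<forall>x. \<exists>P :: real poly. degree P \<le> 2 \<and>
           (\<forall>k::real. k > 2 \<longrightarrow>
              Liminf (at x) (\<lambda>y. ereal ((f y - poly P y) / \<bar>y - x\<bar> powr k)) > -\<infinity>))
     \<and> (\<forall>k::nat. k \<ge> 3 \<longrightarrow>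
          (\<exists>\<epsilon>::real. \<epsilon> > 0 \<and>
             (\<forall>g. Ck k g \<longrightarrow> emeasure lebesgue {x. f x \<noteq> g x} > ennreal \<epsilon>)))"
proof -
  obtain H where dH: "\<And>x. DERIV H x :> hh x" using antideriv[OF continuous_hh] by blast
  have cH: "continuous_on UNIV H"
    by (intro continuous_at_imp_continuous_on ballI DERIV_isCont[OF dH])
  obtain F where dF: "\<And>x. DERIV F x :> H x" using antideriv[OF cH] by blast
  have derF: "deriv F = H" by (rule ext) (rule DERIV_imp_deriv[OF dF])
  have derH: "deriv H = hh" by (rule ext) (rule DERIV_imp_deriv[OF dH])
  have diffF: "F differentiable (at x)" for x
    using dF[of x] derF DERIV_deriv_iff_real_differentiable by metis
  have diffH: "H differentiable (at x)" for x
    using dH[of x] derH DERIV_deriv_iff_real_differentiable by metis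
  have ck2: "Ck 2 F"
    unfolding Ck_def
  proof (intro conjI allI impI)
    fix j :: nat and x :: real assume "j < 2"
    then have "j = 0 \<or> j = 1" by auto
    then show "(deriv ^^ j) F differentiable (at x)"
      using diffF diffH derF by auto
  next
    show "continuous_on UNIV ((deriv ^^ 2) F)"
      using continuous_hh by (simp add: eval_nat_numeral derF derH)
  qed
  have lim: "\<exists>P :: real poly. degree P \<le> 2 \<and>
           (\<forall>k::real. k > 2 \<longrightarrow>
              Liminf (at x) (\<lambda>y. ereal ((F y - poly P y) / \<bar>y - x\<bar> powr k)) > -\<infinity>)" for x
  proof (intro exI conjI allI impI)
    let ?P = "[:F x - H x * x, H x:]"
    show "degree ?P \<le> 2"
      by (rule order_trans[OF degree_pCons_le]) (simp add: le_SucI)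
    fix k :: real
    have nn: "0 \<le> F y - poly ?P y" for y
      using above_tangent[OF dF dH, of x y] by (simp add: algebra_simps)
    have L0: "ereal 0 \<le> Liminf (at x) (\<lambda>y. ereal ((F y - poly ?P y) / \<bar>y - x\<bar> powr k))"
      by (rule Liminf_bounded) (use nn in \<open>auto intro!: always_eventually\<close>)
    show "Liminf (at x) (\<lambda>y. ereal ((F y - poly ?P y) / \<bar>y - x\<bar> powr k)) > -\<infinity>"
      by (rule less_le_trans[OF _ L0]) simp
  qed
  have lus: "\<exists>\<epsilon>::real. \<epsilon> > 0 \<and> (\<forall>g. Ck k g \<longrightarrow> emeasure lebesgue {x. F x \<noteq> g x} > ennreal \<epsilon>)"
    if k: "k \<ge> 3" for k
  proof (intro exI conjI allI impI)
    show "(1/4::real) > 0" by simp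
    fix g assume "Ck k g"
    then have d: "\<And>j x. j < k \<Longrightarrow> (deriv ^^ j) g differentiable (at x)"
      and c: "continuous_on UNIV ((deriv ^^ k) g)" unfolding Ck_def by auto
    have dg: "g differentiable (at x)" for x using d[of 0 x] k by simp
    have ddg: "deriv g differentiable (at x)" for x using d[of 1 x] k by simp
    have dddg: "deriv (deriv g) differentiable (at x)" for x using d[of 2 x] k by (simp add: eval_nat_numeral)
    have g3: "continuous_on UNIV (deriv (deriv (deriv g)))"
    proof (cases "k = 3")
      case True then show ?thesis using c by (simp add: eval_nat_numeral)
    next
      case False
      then have "(deriv ^^ 3) g differentiable (at x)" for x using d[of 3 x] k by simp
      then have "deriv (deriv (deriv g)) differentiable (at x)" for x by (simp add: eval_nat_numeral)
      then show ?thesis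
        by (intro continuous_at_imp_continuous_on ballI differentiable_imp_continuous_within)
    qed
    show "emeasure lebesgue {x. F x \<noteq> g x} > ennreal (1/4)"
      by (rule lusin_fail[OF diffF _ _ dg ddg dddg g3]) (simp_all add: derF derH diffH)
  qed
  show ?thesis using ck2 lim lus by blast
qed

end
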